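(* Let $(\mathcal{L},[\cdot,\cdot,\cdot]_{\mathcal{L}},\mathbf{1})$ be a central (right) $3$-Leibniz algebra over a field $\mathbb{K}$. Then $(\mathcal{L}\otimes\mathcal{L},\{\cdot,\cdot\},\mathbf{1}\otimes\mathbf{1})$ is a central Leibniz algebra, where $\{x_1\otimes x_2,y_1\otimes y_2\}=[x_1,y_1,y_2]_{\mathcal{L}}\otimes x_2+x_1\otimes[x_2,y_1,y_2]_{\mathcal{L}}$. Consequently, the linear map $R$ on $(\mathcal{L}\otimes\mathcal{L})^{\otimes2}$ given by $R((x_1\otimes x_2)\otimes(y_1\otimes y_2))=(y_1\otimes y_2)\otimes(x_1\otimes x_2)+(\mathbf{1}\otimes\mathbf{1})\otimes([x_1,y_1,y_2]_{\mathcal{L}}\otimes x_2)+(\mathbf{1}\otimes\mathbf{1})\otimes(x_1\otimes[x_2,y_1,y_2]_{\mathcal{L}})$ is a solution of the Yang-Baxter equation.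
   Context: A (right) $3$-Leibniz algebra is a vector space $\mathcal{L}$ with a trilinear map $[\cdot,\cdot,\cdot]_{\mathcal{L}}$ such that $[[x_1,x_2,x_3]_{\mathcal{L}},y_1,y_2]_{\mathcal{L}}=[[x_1,y_1,y_2]_{\mathcal{L}},x_2,x_3]_{\mathcal{L}}+[x_1,[x_2,y_1,y_2]_{\mathcal{L}},x_3]_{\mathcal{L}}+[x_1,x_2,[x_3,y_1,y_2]_{\mathcal{L}}]_{\mathcal{L}}$. It is central with central element $\mathbf{1}\in\mathcal{L}$ if $[\mathbf{1},x,y]_{\mathcal{L}}=[x,\mathbf{1},y]_{\mathcal{L}}=[x,y,\mathbf{1}]_{\mathcal{L}}=0$ for all $x,y$. A central Leibniz algebra is a Leibniz algebra ($[[x,y],z]=[[x,z],y]+[x,[y,z]]$) with an element $\mathbf{1}$ such that $[\mathbf{1},x]=0=[x,\mathbf{1}]$ for all $x$. A solution of the Yang-Baxter equation on $V$ is an invertible linear $R:V\otimes V\to V\otimes V$ with $(R\otimes\mathrm{Id})(\mathrm{Id}\otimes R)(R\otimes\mathrm{Id})=(\mathrm{Id}\otimes R)(R\otimes\mathrm{Id})(\mathrm{Id}\otimes R)$. *)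

theory Defs
  imports "HOL-Library.Poly_Mapping"
begin

text \<open>Vector spaces over a field 'k are modelled as free vector spaces
  'a \<Rightarrow>_0 'k (finitely supported coefficient functions on a basis 'a).
  The tensor product of 'a \<Rightarrow>_0 'k and 'b \<Rightarrow>_0 'k is ('a \<times> 'b) \<Rightarrow>_0 'k.\<close>

definition smult :: "'k::field \<Rightarrow> ('a \<Rightarrow>\<^sub>0 'k) \<Rightarrow> ('a \<Rightarrow>\<^sub>0 'k)" where
  "smult c v = Poly_Mapping.map (\<lambda>x. c * x) v"

definition tensor :: "('a \<Rightarrow>\<^sub>0 'k::field) \<Rightarrow> ('b \<Rightarrow>\<^sub>0 'k) \<Rightarrow> (('a \<times> 'b) \<Rightarrow>\<^sub>0 'k)" where
  "tensor x y = (\<Sum>i\<in>Poly_Mapping.keys x. \<Sum>j\<in>Poly_Mapping.keys y. Poly_Mapping.single (i, j) (Poly_Mapping.lookup x i * Poly_Mapping.lookup y j))"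

definition lin_map :: "(('a \<Rightarrow>\<^sub>0 'k::field) \<Rightarrow> ('b \<Rightarrow>\<^sub>0 'k)) \<Rightarrow> bool" where
  "lin_map f \<longleftrightarrow> (\<forall>x y. f (x + y) = f x + f y) \<and> (\<forall>c x. f (smult c x) = smult c (f x))"

definition bilin_map :: "(('a \<Rightarrow>\<^sub>0 'k::field) \<Rightarrow> ('b \<Rightarrow>\<^sub>0 'k) \<Rightarrow> ('c \<Rightarrow>\<^sub>0 'k)) \<Rightarrow> bool" where
  "bilin_map f \<longleftrightarrow> (\<forall>x. lin_map (\<lambda>y. f x y)) \<and> (\<forall>y. lin_map (\<lambda>x. f x y))"

definition trilin_map ::
  "(('a \<Rightarrow>\<^sub>0 'k::field) \<Rightarrow> ('a \<Rightarrow>\<^sub>0 'k) \<Rightarrow> ('a \<Rightarrow>\<^sub>0 'k) \<Rightarrow> ('a \<Rightarrow>\<^sub>0 'k)) \<Rightarrow> bool" where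
  "trilin_map f \<longleftrightarrow> (\<forall>y z. lin_map (\<lambda>x. f x y z)) \<and> (\<forall>x z. lin_map (\<lambda>y. f x y z))
     \<and> (\<forall>x y. lin_map (\<lambda>z. f x y z))"

definition central_3leibniz ::
  "(('a \<Rightarrow>\<^sub>0 'k::field) \<Rightarrow> ('a \<Rightarrow>\<^sub>0 'k) \<Rightarrow> ('a \<Rightarrow>\<^sub>0 'k) \<Rightarrow> ('a \<Rightarrow>\<^sub>0 'k))
   \<Rightarrow> ('a \<Rightarrow>\<^sub>0 'k) \<Rightarrow> bool" where
  "central_3leibniz T one \<longleftrightarrow> trilin_map T
     \<and> (\<forall>x1 x2 x3 y1 y2. T (T x1 x2 x3) y1 y2
          = T (T x1 y1 y2) x2 x3 + T x1 (T x2 y1 y2) x3 + T x1 x2 (T x3 y1 y2))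
     \<and> (\<forall>x y. T one x y = 0 \<and> T x one y = 0 \<and> T x y one = 0)"

definition central_leibniz ::
  "(('a \<Rightarrow>\<^sub>0 'k::field) \<Rightarrow> ('a \<Rightarrow>\<^sub>0 'k) \<Rightarrow> ('a \<Rightarrow>\<^sub>0 'k)) \<Rightarrow> ('a \<Rightarrow>\<^sub>0 'k) \<Rightarrow> bool" where
  "central_leibniz B one \<longleftrightarrow> bilin_map B
     \<and> (\<forall>x y z. B (B x y) z = B (B x z) y + B x (B y z))
     \<and> (\<forall>x. B one x = 0 \<and> B x one = 0)"

text \<open>R \<otimes> Id and Id \<otimes> R on V \<otimes> V \<otimes> V, where V = 'b \<Rightarrow>_0 'k and
  V \<otimes> V \<otimes> V = ('b \<times> 'b \<times> 'b) \<Rightarrow>_0 'k, defined on basis tensors and extended linearly.\<close>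
definition reindex :: "('a \<Rightarrow> 'b) \<Rightarrow> ('a \<Rightarrow>\<^sub>0 'k::field) \<Rightarrow> ('b \<Rightarrow>\<^sub>0 'k)" where
  "reindex g v = (\<Sum>i\<in>Poly_Mapping.keys v. Poly_Mapping.single (g i) (Poly_Mapping.lookup v i))"

definition R_Id ::
  "(('b \<times> 'b \<Rightarrow>\<^sub>0 'k::field) \<Rightarrow> ('b \<times> 'b \<Rightarrow>\<^sub>0 'k)) \<Rightarrow> ('b \<times> 'b \<times> 'b \<Rightarrow>\<^sub>0 'k) \<Rightarrow> ('b \<times> 'b \<times> 'b \<Rightarrow>\<^sub>0 'k)" where
  "R_Id R w = (\<Sum>t\<in>Poly_Mapping.keys w. case t of (p, q, r) \<Rightarrow>
      smult (Poly_Mapping.lookup w t) (reindex (\<lambda>((a, b), c). (a, b, c))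
         (tensor (R (Poly_Mapping.single (p, q) 1)) (Poly_Mapping.single r 1))))"

definition Id_R ::
  "(('b \<times> 'b \<Rightarrow>\<^sub>0 'k::field) \<Rightarrow> ('b \<times> 'b \<Rightarrow>\<^sub>0 'k)) \<Rightarrow> ('b \<times> 'b \<times> 'b \<Rightarrow>\<^sub>0 'k) \<Rightarrow> ('b \<times> 'b \<times> 'b \<Rightarrow>\<^sub>0 'k)" where
  "Id_R R w = (\<Sum>t\<in>Poly_Mapping.keys w. case t of (p, q, r) \<Rightarrow>
      smult (Poly_Mapping.lookup w t) (tensor (Poly_Mapping.single p 1) (R (Poly_Mapping.single (q, r) 1))))"

definition YBE_solution ::
  "(('b \<times> 'b \<Rightarrow>\<^sub>0 'k::field) \<Rightarrow> ('b \<times> 'b \<Rightarrow>\<^sub>0 'k)) \<Rightarrow> bool" where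
  "YBE_solution R \<longleftrightarrow> lin_map R \<and> bij R
     \<and> R_Id R \<circ> Id_R R \<circ> R_Id R = Id_R R \<circ> R_Id R \<circ> Id_R R"

end

theory Submission
  imports Defs
begin

lemma lookup_smult[simp]: "Poly_Mapping.lookup (smult c v) k = c * Poly_Mapping.lookup v k"
  unfolding smult_def by (simp add: Poly_Mapping.map.rep_eq when_def)

lemma lookup_tensor_pair: "Poly_Mapping.lookup (tensor x y) (a,b) = Poly_Mapping.lookup x a * Poly_Mapping.lookup y b"
proof -
  have "Poly_Mapping.lookup (tensor x y) (a,b) = (\<Sum>i\<in>Poly_Mapping.keys x. \<Sum>j\<in>Poly_Mapping.keys y. (if i = a then (if j = b then Poly_Mapping.lookup x i * Poly_Mapping.lookup y j else 0) else 0))"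
    unfolding tensor_def by (auto simp add: lookup_sum lookup_single when_def intro!: sum.cong)
  also have "\<dots> = (\<Sum>i\<in>Poly_Mapping.keys x. (if i = a then Poly_Mapping.lookup x i * Poly_Mapping.lookup y b else 0))"
    by (rule sum.cong) (auto simp: sum.delta in_keys_iff)
  also have "\<dots> = Poly_Mapping.lookup x a * Poly_Mapping.lookup y b"
    by (auto simp: sum.delta in_keys_iff)
  finally show ?thesis .
qed

lemma lookup_tensor[simp]: "Poly_Mapping.lookup (tensor x y) k = Poly_Mapping.lookup x (fst k) * Poly_Mapping.lookup y (snd k)"
  by (cases k) (simp add: lookup_tensor_pair)

lemma smult_add_right: "smult c (x + y) = smult c x + smult c y"
  by (rule poly_mapping_eqI) (simp add: lookup_add algebra_simps)
lemma smult_add_left: "smult (c + d) x = smult c x + smult d x"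
  by (rule poly_mapping_eqI) (simp add: lookup_add algebra_simps)
lemma smult_smult: "smult c (smult d x) = smult (c*d) x"
  by (rule poly_mapping_eqI) (simp add: algebra_simps)
lemma smult_zero_right[simp]: "smult c 0 = 0"
  by (rule poly_mapping_eqI) simp
lemma smult_zero_left[simp]: "smult 0 x = 0"
  by (rule poly_mapping_eqI) simp
lemma smult_one[simp]: "smult 1 x = x"
  by (rule poly_mapping_eqI) simp
lemma smult_minus: "smult c (x - y) = smult c x - smult c y"
  by (rule poly_mapping_eqI) (simp add: lookup_minus algebra_simps)
lemma single_as_smult: "Poly_Mapping.single i c = smult c (Poly_Mapping.single i 1)"
  by (rule poly_mapping_eqI) (simp add: lookup_single when_def)
lemma smult_sum: "smult c (sum f S) = (\<Sum>i\<in>S. smult c (f i))"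
  by (rule poly_mapping_eqI) (simp add: lookup_sum sum_distrib_left)

lemma lin_mapI: "(\<And>x y. f (x+y) = f x + f y) \<Longrightarrow> (\<And>c x. f (smult c x) = smult c (f x)) \<Longrightarrow> lin_map f"
  unfolding lin_map_def by blast
lemma lin_add: "lin_map f \<Longrightarrow> f (x + y) = f x + f y"
  unfolding lin_map_def by blast
lemma lin_smult: "lin_map f \<Longrightarrow> f (smult c x) = smult c (f x)"
  unfolding lin_map_def by blast
lemma lin_zero: "lin_map f \<Longrightarrow> f 0 = 0"
  using lin_smult[of f 0 0] by simp
lemma lin_diff: "lin_map f \<Longrightarrow> f (x - y) = f x - f y"
  using lin_add[of f "x - y" y] by (simp add: algebra_simps)
lemma lin_sum: "lin_map f \<Longrightarrow> f (sum g S) = (\<Sum>i\<in>S. f (g i))"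
proof (induction S rule: infinite_finite_induct)
  case (infinite A) then show ?case by (simp add: lin_zero)
next
  case empty then show ?case by (simp add: lin_zero)
next
  case (insert x F) then show ?case by (simp add: lin_add)
qed

lemma basis_expand: "w = (\<Sum>t\<in>Poly_Mapping.keys w. smult (Poly_Mapping.lookup w t) (Poly_Mapping.single t 1))"
proof (rule poly_mapping_eqI)
  fix k
  have "(\<Sum>t\<in>Poly_Mapping.keys w. Poly_Mapping.lookup w t * Poly_Mapping.lookup (Poly_Mapping.single t 1) k)
     = (\<Sum>t\<in>Poly_Mapping.keys w. if t = k then Poly_Mapping.lookup w t else 0)"
    by (rule sum.cong) (auto simp: lookup_single when_def)
  also have "\<dots> = Poly_Mapping.lookup w k" by (auto simp: sum.delta in_keys_iff)
  finally show "Poly_Mapping.lookup w k = Poly_Mapping.lookup (\<Sum>t\<in>Poly_Mapping.keys w. smult (Poly_Mapping.lookup w t) (Poly_Mapping.single t 1)) k"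
    by (simp add: lookup_sum)
qed

lemma lin_eq: "lin_map f \<Longrightarrow> lin_map g \<Longrightarrow> (\<And>i. f (Poly_Mapping.single i 1) = g (Poly_Mapping.single i 1)) \<Longrightarrow> f = g"
proof (rule ext)
  fix w assume f: "lin_map f" and g: "lin_map g" and e: "\<And>i. f (Poly_Mapping.single i 1) = g (Poly_Mapping.single i 1)"
  have "f w = f (\<Sum>t\<in>Poly_Mapping.keys w. smult (Poly_Mapping.lookup w t) (Poly_Mapping.single t 1))"
    by (subst basis_expand[of w]) (rule refl)
  also have "\<dots> = g (\<Sum>t\<in>Poly_Mapping.keys w. smult (Poly_Mapping.lookup w t) (Poly_Mapping.single t 1))"
    by (simp add: lin_sum[OF f] lin_sum[OF g] lin_smult[OF f] lin_smult[OF g] e)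
  also have "\<dots> = g w" by (subst basis_expand[of w, symmetric]) (rule refl)
  finally show "f w = g w" .
qed

lemma bilin_eq:
  assumes "\<And>u. lin_map (\<lambda>v. F u v)" "\<And>u. lin_map (\<lambda>v. G u v)"
    "\<And>v. lin_map (\<lambda>u. F u v)" "\<And>v. lin_map (\<lambda>u. G u v)"
    "\<And>i j. F (Poly_Mapping.single i 1) (Poly_Mapping.single j 1) = G (Poly_Mapping.single i 1) (Poly_Mapping.single j 1)"
  shows "F u v = G u v"
proof -
  have "\<And>j. (\<lambda>u. F u (Poly_Mapping.single j 1)) = (\<lambda>u. G u (Poly_Mapping.single j 1))"
    by (rule lin_eq) (use assms in auto)
  then have "(\<lambda>v. F u v) = (\<lambda>v. G u v)"
    by (intro lin_eq) (use assms in \<open>auto dest: fun_cong\<close>)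
  then show ?thesis by (rule fun_cong)
qed

lemma trilin_eq:
  assumes "\<And>u v. lin_map (\<lambda>w. F u v w)" "\<And>u v. lin_map (\<lambda>w. G u v w)"
    "\<And>u w. lin_map (\<lambda>v. F u v w)" "\<And>u w. lin_map (\<lambda>v. G u v w)"
    "\<And>v w. lin_map (\<lambda>u. F u v w)" "\<And>v w. lin_map (\<lambda>u. G u v w)"
    "\<And>i j k. F (Poly_Mapping.single i 1) (Poly_Mapping.single j 1) (Poly_Mapping.single k 1)
       = G (Poly_Mapping.single i 1) (Poly_Mapping.single j 1) (Poly_Mapping.single k 1)"
  shows "F u v w = G u v w"
proof -
  have "\<And>k. F u v (Poly_Mapping.single k 1) = G u v (Poly_Mapping.single k 1)"
    by (rule bilin_eq[where F="\<lambda>u v. F u v (Poly_Mapping.single k 1)" and G="\<lambda>u v. G u v (Poly_Mapping.single k 1)" for k])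
      (use assms in auto)
  then have "(\<lambda>w. F u v w) = (\<lambda>w. G u v w)"
    by (intro lin_eq) (use assms in auto)
  then show ?thesis by (rule fun_cong)
qed

definition linext :: "('i \<Rightarrow> ('b \<Rightarrow>\<^sub>0 'k::field)) \<Rightarrow> ('i \<Rightarrow>\<^sub>0 'k) \<Rightarrow> ('b \<Rightarrow>\<^sub>0 'k)" where
  "linext f w = (\<Sum>t\<in>Poly_Mapping.keys w. smult (Poly_Mapping.lookup w t) (f t))"

lemma linext_superset: "finite S \<Longrightarrow> Poly_Mapping.keys w \<subseteq> S \<Longrightarrow> linext f w = (\<Sum>t\<in>S. smult (Poly_Mapping.lookup w t) (f t))"
  unfolding linext_def by (rule sum.mono_neutral_left) (auto simp: in_keys_iff)

lemma lin_linext: "lin_map (linext f)"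
proof (rule lin_mapI)
  fix x y :: "'a \<Rightarrow>\<^sub>0 'b"
  define S where "S = Poly_Mapping.keys x \<union> Poly_Mapping.keys y \<union> Poly_Mapping.keys (x + y)"
  have fin: "finite S" by (simp add: S_def)
  have e1: "linext f x = (\<Sum>t\<in>S. smult (Poly_Mapping.lookup x t) (f t))"
    by (rule linext_superset[OF fin]) (auto simp: S_def)
  have e2: "linext f y = (\<Sum>t\<in>S. smult (Poly_Mapping.lookup y t) (f t))"
    by (rule linext_superset[OF fin]) (auto simp: S_def)
  have e3: "linext f (x+y) = (\<Sum>t\<in>S. smult (Poly_Mapping.lookup (x+y) t) (f t))"
    by (rule linext_superset[OF fin]) (auto simp: S_def)
  show "linext f (x + y) = linext f x + linext f y"
    unfolding e1 e2 e3 by (simp add: lookup_add smult_add_left sum.distrib)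
next
  fix c and x :: "'a \<Rightarrow>\<^sub>0 'b"
  define S where "S = Poly_Mapping.keys x \<union> Poly_Mapping.keys (smult c x)"
  have fin: "finite S" by (simp add: S_def)
  have e1: "linext f x = (\<Sum>t\<in>S. smult (Poly_Mapping.lookup x t) (f t))"
    by (rule linext_superset[OF fin]) (auto simp: S_def)
  have e2: "linext f (smult c x) = (\<Sum>t\<in>S. smult (Poly_Mapping.lookup (smult c x) t) (f t))"
    by (rule linext_superset[OF fin]) (auto simp: S_def)
  show "linext f (smult c x) = smult c (linext f x)"
    unfolding e1 e2 by (simp add: smult_sum smult_smult)
qed

lemma linext_single: "linext f (Poly_Mapping.single i 1) = f i"
  unfolding linext_def by simp

lemma tensor_add_left: "tensor (x + y) z = tensor x z + tensor y z"
  by (rule poly_mapping_eqI) (simp add: lookup_add algebra_simps)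
lemma tensor_add_right: "tensor z (x + y) = tensor z x + tensor z y"
  by (rule poly_mapping_eqI) (simp add: lookup_add algebra_simps)
lemma tensor_smult_left: "tensor (smult c x) y = smult c (tensor x y)"
  by (rule poly_mapping_eqI) (simp add: algebra_simps)
lemma tensor_smult_right: "tensor x (smult c y) = smult c (tensor x y)"
  by (rule poly_mapping_eqI) (simp add: algebra_simps)
lemma tensor_zero_left[simp]: "tensor 0 y = 0"
  by (rule poly_mapping_eqI) simp
lemma tensor_zero_right[simp]: "tensor x 0 = 0"
  by (rule poly_mapping_eqI) simp
lemma tensor_diff_left: "tensor (x - y) z = tensor x z - tensor y z"
  by (rule poly_mapping_eqI) (simp add: lookup_minus algebra_simps)
lemma tensor_diff_right: "tensor z (x - y) = tensor z x - tensor z y"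
  by (rule poly_mapping_eqI) (simp add: lookup_minus algebra_simps)
lemma tensor_single: "tensor (Poly_Mapping.single i a) (Poly_Mapping.single j b) = Poly_Mapping.single (i,j) (a*b)"
  by (rule poly_mapping_eqI) (auto simp: lookup_single when_def)

lemma lin_tensor_left: "lin_map (\<lambda>x. tensor x y)"
  by (rule lin_mapI) (simp_all add: tensor_add_left tensor_smult_left)
lemma lin_tensor_right: "lin_map (\<lambda>y. tensor x y)"
  by (rule lin_mapI) (simp_all add: tensor_add_right tensor_smult_right)

lemma reindex_linext: "reindex g = linext (\<lambda>i. Poly_Mapping.single (g i) 1)"
  unfolding reindex_def linext_def
  by (rule ext, rule sum.cong, simp, subst single_as_smult, rule refl)

lemma lin_reindex: "lin_map (reindex g)"
  by (simp add: reindex_linext lin_linext)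
lemma reindex_single: "reindex g (Poly_Mapping.single i 1) = Poly_Mapping.single (g i) 1"
  by (simp add: reindex_linext linext_single)

lemma R_Id_linext: "R_Id R = linext (\<lambda>t. case t of (p, q, r) \<Rightarrow> reindex (\<lambda>((a, b), c). (a, b, c))
         (tensor (R (Poly_Mapping.single (p, q) 1)) (Poly_Mapping.single r 1)))"
  unfolding R_Id_def linext_def
  by (rule ext, rule sum.cong) (auto split: prod.splits)

lemma Id_R_linext: "Id_R R = linext (\<lambda>t. case t of (p, q, r) \<Rightarrow> (tensor (Poly_Mapping.single p 1) (R (Poly_Mapping.single (q, r) 1))))"
  unfolding Id_R_def linext_def
  by (rule ext, rule sum.cong) (auto split: prod.splits)

lemma asc: "reindex (\<lambda>((a, b), c). (a, b, c)) (tensor (tensor x y) z) = tensor x (tensor y z)"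
  by (rule trilin_eq[where F="\<lambda>x y z. reindex (\<lambda>((a, b), c). (a, b, c)) (tensor (tensor x y) z)"
        and G="\<lambda>x y z. tensor x (tensor y z)"])
   (auto intro!: lin_mapI simp: tensor_add_left tensor_add_right tensor_smult_left tensor_smult_right
     lin_add[OF lin_reindex] lin_smult[OF lin_reindex] tensor_single reindex_single)


theorem theorem5p5:
  fixes T :: "('a \<Rightarrow>\<^sub>0 'k::field) \<Rightarrow> ('a \<Rightarrow>\<^sub>0 'k) \<Rightarrow> ('a \<Rightarrow>\<^sub>0 'k) \<Rightarrow> ('a \<Rightarrow>\<^sub>0 'k)"
    and one :: "'a \<Rightarrow>\<^sub>0 'k"
    and B :: "('a \<times> 'a \<Rightarrow>\<^sub>0 'k) \<Rightarrow> ('a \<times> 'a \<Rightarrow>\<^sub>0 'k) \<Rightarrow> ('a \<times> 'a \<Rightarrow>\<^sub>0 'k)"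
    and R :: "(('a \<times> 'a) \<times> ('a \<times> 'a) \<Rightarrow>\<^sub>0 'k) \<Rightarrow> (('a \<times> 'a) \<times> ('a \<times> 'a) \<Rightarrow>\<^sub>0 'k)"
  assumes L: "central_3leibniz T one"
    and B_bilin: "bilin_map B"
    and B_def: "\<And>x1 x2 y1 y2. B (tensor x1 x2) (tensor y1 y2)
                   = tensor (T x1 y1 y2) x2 + tensor x1 (T x2 y1 y2)"
    and R_lin: "lin_map R"
    and R_def: "\<And>x1 x2 y1 y2. R (tensor (tensor x1 x2) (tensor y1 y2))
                   = tensor (tensor y1 y2) (tensor x1 x2)
                     + tensor (tensor one one) (tensor (T x1 y1 y2) x2)
                     + tensor (tensor one one) (tensor x1 (T x2 y1 y2))"
  shows "central_leibniz B (tensor one one) \<and> YBE_solution R"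
proof -
  have Ttri: "trilin_map T"
    and Tleib: "\<And>x1 x2 x3 y1 y2. T (T x1 x2 x3) y1 y2
          = T (T x1 y1 y2) x2 x3 + T x1 (T x2 y1 y2) x3 + T x1 x2 (T x3 y1 y2)"
    and T1: "\<And>x y. T one x y = 0" "\<And>x y. T x one y = 0" "\<And>x y. T x y one = 0"
  proof -
    have L': "trilin_map T \<and> (\<forall>x1 x2 x3 y1 y2. T (T x1 x2 x3) y1 y2
          = T (T x1 y1 y2) x2 x3 + T x1 (T x2 y1 y2) x3 + T x1 x2 (T x3 y1 y2))
     \<and> (\<forall>x y. T one x y = 0 \<and> T x one y = 0 \<and> T x y one = 0)"
      using L unfolding central_3leibniz_def .
    show "trilin_map T" using L' by (rule conjunct1)
    show "\<And>x1 x2 x3 y1 y2. T (T x1 x2 x3) y1 y2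
          = T (T x1 y1 y2) x2 x3 + T x1 (T x2 y1 y2) x3 + T x1 x2 (T x3 y1 y2)"
      using conjunct1[OF conjunct2[OF L']] by blast
    show "\<And>x y. T one x y = 0" "\<And>x y. T x one y = 0" "\<And>x y. T x y one = 0"
      using conjunct2[OF conjunct2[OF L']] by blast+
  qed
  have Tadd: "\<And>x x' y z. T (x + x') y z = T x y z + T x' y z"
     "\<And>x y y' z. T x (y + y') z = T x y z + T x y' z"
     "\<And>x y z z'. T x y (z + z') = T x y z + T x y z'"
    using Ttri unfolding trilin_map_def lin_map_def by auto
  have Tsm: "\<And>c x y z. T (smult c x) y z = smult c (T x y z)"
     "\<And>c x y z. T x (smult c y) z = smult c (T x y z)"
     "\<And>c x y z. T x y (smult c z) = smult c (T x y z)"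
    using Ttri unfolding trilin_map_def lin_map_def by auto
  define e where "e = tensor one one"
  have Bl1: "\<And>u. lin_map (B u)" and Bl2: "\<And>v. lin_map (\<lambda>u. B u v)"
    using B_bilin unfolding bilin_map_def by auto
  have Badd: "\<And>x x' y. B (x + x') y = B x y + B x' y" "\<And>x y y'. B x (y + y') = B x y + B x y'"
    using Bl1 Bl2 lin_add by metis+
  have Bsm: "\<And>c x y. B (smult c x) y = smult c (B x y)" "\<And>c x y. B x (smult c y) = smult c (B x y)"
    using Bl1 Bl2 lin_smult by metis+
  have Radd: "\<And>x y. R (x + y) = R x + R y" and Rsm: "\<And>c x. R (smult c x) = smult c (R x)"
    using R_lin lin_add lin_smult by metis+
  have sgl: "\<And>i j. Poly_Mapping.single (i,j) (1::'k) = tensor (Poly_Mapping.single i 1) (Poly_Mapping.single j 1)"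
    by (simp add: tensor_single)
  have Be1: "B e v = 0" for v
  proof -
    have "B e = (\<lambda>v. 0)"
    proof (rule lin_eq[OF Bl1])
      show "lin_map (\<lambda>v. 0::('a \<times> 'a \<Rightarrow>\<^sub>0 'k))" by (rule lin_mapI) simp_all
      fix i :: "'a\<times>'a" obtain i1 i2 where "i = (i1,i2)" by force
      then show "B e (Poly_Mapping.single i 1) = 0" by (simp add: e_def sgl B_def T1)
    qed
    then show ?thesis by simp
  qed
  have Be2: "B v e = 0" for v
  proof -
    have "(\<lambda>v. B v e) = (\<lambda>v. 0)"
    proof (rule lin_eq[OF Bl2])
      show "lin_map (\<lambda>v. 0::('a \<times> 'a \<Rightarrow>\<^sub>0 'k))" by (rule lin_mapI) simp_all
      fix i :: "'a\<times>'a" obtain i1 i2 where "i = (i1,i2)" by force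
      then show "B (Poly_Mapping.single i 1) e = 0" by (simp add: e_def sgl B_def T1)
    qed
    then show ?thesis by meson
  qed
  have Bpure: "B (B (tensor x1 x2) (tensor y1 y2)) (tensor z1 z2) = B (B (tensor x1 x2) (tensor z1 z2)) (tensor y1 y2)
     + B (tensor x1 x2) (B (tensor y1 y2) (tensor z1 z2))" for x1 x2 y1 y2 z1 z2
    apply (simp only: B_def Badd tensor_add_left tensor_add_right Tleib[of x1 y1 y2 z1 z2] Tleib[of x2 y1 y2 z1 z2] Tadd)
    apply (simp only: add_ac)
    done
  have BL: "B (B x y) z = B (B x z) y + B x (B y z)" for x y z
  proof (rule trilin_eq[where F="\<lambda>x y z. B (B x y) z" and G="\<lambda>x y z. B (B x z) y + B x (B y z)"])
    fix i j k :: "'a \<times> 'a"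
    obtain i1 i2 j1 j2 k1 k2 where "i = (i1,i2)" "j = (j1,j2)" "k = (k1,k2)" by (meson surj_pair)
    then show "B (B (Poly_Mapping.single i 1) (Poly_Mapping.single j 1)) (Poly_Mapping.single k 1) =
         B (B (Poly_Mapping.single i 1) (Poly_Mapping.single k 1)) (Poly_Mapping.single j 1) +
         B (Poly_Mapping.single i 1) (B (Poly_Mapping.single j 1) (Poly_Mapping.single k 1))"
      by (simp only: sgl) (rule Bpure)
  next
    show "\<And>u v. lin_map (\<lambda>w. B (B u v) w)" by (simp add: Bl1)
  next
    show "\<And>u v. lin_map (\<lambda>w. B (B u w) v + B u (B v w))" by (rule lin_mapI) (simp_all add: Badd Bsm smult_add_right)
  next
    show "\<And>u w. lin_map (\<lambda>v. B (B u v) w)" by (rule lin_mapI) (simp_all add: Badd Bsm)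
  next
    show "\<And>u w. lin_map (\<lambda>v. B (B u w) v + B u (B v w))" by (rule lin_mapI) (simp_all add: Badd Bsm smult_add_right)
  next
    show "\<And>v w. lin_map (\<lambda>u. B (B u v) w)" by (rule lin_mapI) (simp_all add: Badd Bsm)
  next
    show "\<And>v w. lin_map (\<lambda>u. B (B u w) v + B u (B v w))" by (rule lin_mapI) (simp_all add: Badd Bsm smult_add_right)
  qed
  have CL: "central_leibniz B (tensor one one)"
    unfolding central_leibniz_def e_def[symmetric] using B_bilin BL Be1 Be2 by blast
  have Rform: "R (tensor u v) = tensor v u + tensor e (B u v)" for u v
  proof (rule bilin_eq[where F="\<lambda>u v. R (tensor u v)" and G="\<lambda>u v. tensor v u + tensor e (B u v)"])
    fix i j :: "'a \<times> 'a"
    obtain i1 i2 j1 j2 where "i = (i1,i2)" "j = (j1,j2)" by (meson surj_pair)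
    then show "R (tensor (Poly_Mapping.single i 1) (Poly_Mapping.single j 1)) =
      tensor (Poly_Mapping.single j 1) (Poly_Mapping.single i 1) + tensor e (B (Poly_Mapping.single i 1) (Poly_Mapping.single j 1))"
      by (simp only: sgl R_def B_def e_def tensor_add_right add.assoc)
  next
    show "\<And>u. lin_map (\<lambda>v. R (tensor u v))" by (rule lin_mapI) (simp_all add: Radd Rsm tensor_add_right tensor_smult_right)
  next
    show "\<And>v. lin_map (\<lambda>u. R (tensor u v))" by (rule lin_mapI) (simp_all add: Radd Rsm tensor_add_left tensor_smult_left)
  next
    show "\<And>u. lin_map (\<lambda>v. tensor v u + tensor e (B u v))" by (rule lin_mapI) (simp_all add: Badd Bsm tensor_add_right tensor_add_left tensor_smult_right tensor_smult_left smult_add_right add_ac)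
  next
    show "\<And>v. lin_map (\<lambda>u. tensor v u + tensor e (B u v))" by (rule lin_mapI) (simp_all add: Badd Bsm tensor_add_right tensor_add_left tensor_smult_right tensor_smult_left smult_add_right add_ac)
  qed
  let ?asc = "\<lambda>((a::'a\<times>'a, b::'a\<times>'a), c::'a\<times>'a). (a, b, c)"
  have linR12: "lin_map (R_Id R)" by (simp add: R_Id_linext lin_linext)
  have linR23: "lin_map (Id_R R)" by (simp add: Id_R_linext lin_linext)
  have R12a: "R_Id R (reindex (\<lambda>((a, b), c). (a, b, c)) (tensor w z)) = reindex (\<lambda>((a, b), c). (a, b, c)) (tensor (R w) z)" for w z
  proof (rule bilin_eq[where F="\<lambda>w z. R_Id R (reindex (\<lambda>((a, b), c). (a, b, c)) (tensor w z))"
        and G="\<lambda>w z. reindex (\<lambda>((a, b), c). (a, b, c)) (tensor (R w) z)"])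
    fix i :: "('a \<times> 'a) \<times> ('a \<times> 'a)" and j :: "'a \<times> 'a"
    obtain p q where "i = (p,q)" by (meson surj_pair)
    then show "R_Id R (reindex (\<lambda>((a, b), c). (a, b, c)) (tensor (Poly_Mapping.single i 1) (Poly_Mapping.single j 1))) =
          reindex (\<lambda>((a, b), c). (a, b, c)) (tensor (R (Poly_Mapping.single i 1)) (Poly_Mapping.single j 1))"
      by (simp add: tensor_single reindex_single R_Id_linext linext_single)
  qed (auto intro!: lin_mapI simp: lin_add[OF linR12] lin_smult[OF linR12] lin_add[OF lin_reindex] lin_smult[OF lin_reindex]
      Radd Rsm tensor_add_left tensor_add_right tensor_smult_left tensor_smult_right)
  have R12: "R_Id R (tensor x (tensor y z)) = tensor y (tensor x z) + tensor e (tensor (B x y) z)" for x y z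
    using R12a[of "tensor x y" z]
    by (simp add: asc Rform tensor_add_left lin_add[OF lin_reindex])
  have R23a: "Id_R R (tensor x w) = tensor x (R w)" for x w
  proof (rule bilin_eq[where F="\<lambda>x w. Id_R R (tensor x w)" and G="\<lambda>x w. tensor x (R w)"])
    fix j :: "('a \<times> 'a) \<times> ('a \<times> 'a)" and i :: "'a \<times> 'a"
    obtain p q where "j = (p,q)" by (meson surj_pair)
    then show "Id_R R (tensor (Poly_Mapping.single i 1) (Poly_Mapping.single j 1)) = tensor (Poly_Mapping.single i 1) (R (Poly_Mapping.single j 1))"
      by (simp add: tensor_single Id_R_linext linext_single)
  qed (auto intro!: lin_mapI simp: lin_add[OF linR23] lin_smult[OF linR23] 
      Radd Rsm tensor_add_left tensor_add_right tensor_smult_left tensor_smult_right)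
  have R23: "Id_R R (tensor x (tensor y z)) = tensor x (tensor z y) + tensor x (tensor e (B y z))" for x y z
    by (simp add: R23a Rform tensor_add_right)
  have YBEt: "R_Id R (Id_R R (R_Id R (tensor x (tensor y z)))) = Id_R R (R_Id R (Id_R R (tensor x (tensor y z))))" for x y z
    apply (simp only: R12 R23 lin_add[OF linR12] lin_add[OF linR23] tensor_add_left tensor_add_right Be1 Be2 tensor_zero_left tensor_zero_right add_0_left add_0_right BL[of x y z])
    apply (simp only: add_ac)
    done
  have YBE: "R_Id R \<circ> Id_R R \<circ> R_Id R = Id_R R \<circ> R_Id R \<circ> Id_R R"
  proof (rule lin_eq)
    show "lin_map (R_Id R \<circ> Id_R R \<circ> R_Id R)" "lin_map (Id_R R \<circ> R_Id R \<circ> Id_R R)"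
      by (auto intro!: lin_mapI simp: lin_add[OF linR12] lin_smult[OF linR12] lin_add[OF linR23] lin_smult[OF linR23])
    fix i :: "('a \<times> 'a) \<times> ('a \<times> 'a) \<times> ('a \<times> 'a)"
    obtain p q r where "i = (p,q,r)" using prod_cases3 by blast
    moreover have "Poly_Mapping.single (p,q,r) (1::'k) = tensor (Poly_Mapping.single p 1) (tensor (Poly_Mapping.single q 1) (Poly_Mapping.single r 1))"
      by (simp add: tensor_single)
    ultimately show "(R_Id R \<circ> Id_R R \<circ> R_Id R) (Poly_Mapping.single i 1) = (Id_R R \<circ> R_Id R \<circ> Id_R R) (Poly_Mapping.single i 1)"
      using YBEt by simp
  qed
  define S where "S = linext (\<lambda>(p::'a\<times>'a, q::'a\<times>'a). tensor (Poly_Mapping.single q 1) (Poly_Mapping.single p (1::'k)) - tensor (B (Poly_Mapping.single q 1) (Poly_Mapping.single p 1)) e)"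
  have linS: "lin_map S" by (simp add: S_def lin_linext)
  have Sform: "S (tensor u v) = tensor v u - tensor (B v u) e" for u v
  proof (rule bilin_eq[where F="\<lambda>u v. S (tensor u v)" and G="\<lambda>u v. tensor v u - tensor (B v u) e"])
    fix i j :: "'a \<times> 'a"
    show "S (tensor (Poly_Mapping.single i 1) (Poly_Mapping.single j 1)) = tensor (Poly_Mapping.single j 1) (Poly_Mapping.single i 1) - tensor (B (Poly_Mapping.single j 1) (Poly_Mapping.single i 1)) e"
      by (simp add: tensor_single S_def linext_single)
  qed (auto intro!: lin_mapI simp: lin_add[OF linS] lin_smult[OF linS] Badd Bsm smult_minus
      tensor_add_left tensor_add_right tensor_smult_left tensor_smult_right algebra_simps)
  have SR: "S (R w) = w" for w
  proof -
    have "(\<lambda>w. S (R w)) = (\<lambda>w. w)"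
    proof (rule lin_eq)
      show "lin_map (\<lambda>w. S (R w))" "lin_map (\<lambda>w. w)"
        by (auto intro!: lin_mapI simp: lin_add[OF linS] lin_smult[OF linS] Radd Rsm)
      fix i :: "('a \<times> 'a) \<times> ('a \<times> 'a)"
      obtain p q where "i = (p,q)" by (meson surj_pair)
      then show "S (R (Poly_Mapping.single i 1)) = Poly_Mapping.single i 1"
        by (simp add: sgl Rform lin_add[OF linS] Sform Be2)
    qed
    then show ?thesis by meson
  qed
  have RS: "R (S w) = w" for w
  proof -
    have "(\<lambda>w. R (S w)) = (\<lambda>w. w)"
    proof (rule lin_eq)
      show "lin_map (\<lambda>w. R (S w))" "lin_map (\<lambda>w. w)"
        by (auto intro!: lin_mapI simp: lin_add[OF linS] lin_smult[OF linS] Radd Rsm)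
      fix i :: "('a \<times> 'a) \<times> ('a \<times> 'a)"
      obtain p q where "i = (p,q)" by (meson surj_pair)
      then show "R (S (Poly_Mapping.single i 1)) = Poly_Mapping.single i 1"
        by (simp add: sgl Rform lin_diff[OF R_lin] Sform Be2)
    qed
    then show ?thesis by meson
  qed
  have "bij R" unfolding bij_def inj_def surj_def by (metis SR RS)
  then show ?thesis using CL YBE R_lin unfolding YBE_solution_def by blast
qed

end
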